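(* Let $N>0$, $\beta>0$, $0<\rho<1$, $\sigma>0$, $\gamma>0$ and $0\le\pi_1\le\pi_2\le 1$ be constants, and let $\Delta_1,\Delta_2:[0,\infty)\to[0,\infty)$ be continuous with $\Delta_i(t)\to0$ as $t\to+\infty$ ($i=1,2$). Write $q(t)=\Delta_1(t)\pi_1+\Delta_2(t)(\pi_2-\pi_1)$ and consider $$S'=-\tfrac{\beta}{N}S(1-\rho)I-\tfrac{S}{N}q(t),\quad E'=\tfrac{\beta}{N}S(1-\rho)I-\sigma E,\quad I'=\sigma E-\gamma I,\quad R'=\gamma I,\quad V'=\tfrac{S}{N}q(t),$$ with initial data $S_0,E_0,I_0,R_0,V_0\ge 0$ satisfying $S_0+E_0+I_0+R_0+V_0=N$. Then the solution $(S,E,I,R,V)(t)$ converges as $t\to+\infty$ to a fixed point of the limit system $$S'=-\tfrac{\beta}{N}S(1-\rho)I,\quad E'=\tfrac{\beta}{N}S(1-\rho)I-\sigma E,\quad I'=\sigma E-\gamma I,\quad R'=\gamma I,\quad V'=0,$$ i.e. to a point of the form $(S_\infty,0,0,N-S_\infty-V_\infty,V_\infty)$ with $S_\infty,V_\infty\ge0$, $S_\infty+V_\infty\le N$.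
   Context: SEIR epidemic model with vaccination: $S$ susceptible, $E$ exposed, $I$ infected, $R$ removed, $V$ vaccine-immunized individuals in a population of constant size $N$; $\Delta_1,\Delta_2$ are daily numbers of first and second doses, $\pi_1,\pi_2$ immunity fractions after each dose. $R_0$ denotes the initial value of $R$. *)

theory Defs
  imports Complex_Main
begin

end

theory Submission
  imports Defs "HOL-Analysis.Analysis"
begin


lemma mvt_w:
  fixes f :: "real \<Rightarrow> real"
  assumes ab: "a \<le> b" and sub: "{a..b} \<subseteq> T"
    and d: "\<And>x. x \<in> {a..b} \<Longrightarrow> (f has_real_derivative f' x) (at x within T)"
  shows "\<exists>x\<in>{a..b}. f b - f a = f' x * (b - a)"
proof -
  have "\<exists>x\<in>{a..b}. f b - f a = (\<lambda>h. f' x * h) (b - a)"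
  proof (rule mvt_very_simple[OF ab])
    fix x assume x1: "a \<le> x" and x2: "x \<le> b"
    have xi: "x \<in> {a..b}" using x1 x2 by simp
    have "(f has_real_derivative f' x) (at x within {a..b})"
      by (rule has_field_derivative_subset[OF d[OF xi] sub])
    then show "(f has_derivative (\<lambda>h. f' x * h)) (at x within {a..b})"
      unfolding has_field_derivative_def .
  qed
  then show ?thesis by simp
qed

lemma mono_conv:
  fixes f :: "real \<Rightarrow> real"
  assumes mono: "\<And>s t. 0 \<le> s \<Longrightarrow> s \<le> t \<Longrightarrow> f s \<le> f t"
    and bnd: "\<And>t. t \<ge> 0 \<Longrightarrow> f t \<le> B"
  shows "\<exists>L. (f \<longlongrightarrow> L) at_top \<and> (\<forall>t\<ge>0. f t \<le> L)"
proof -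
  define L where "L = Sup (f ` {0..})"
  have bdd: "bdd_above (f ` {0..})" using bnd by (auto intro!: bdd_aboveI)
  have up: "\<forall>t\<ge>0. f t \<le> L" unfolding L_def using bdd by (auto intro!: cSUP_upper)
  have "(f \<longlongrightarrow> L) at_top"
  proof (rule increasing_tendsto)
    show "\<forall>\<^sub>F n in at_top. f n \<le> L" using eventually_ge_at_top[of 0] by (rule eventually_mono) (use up in auto)
  next
    fix x assume "x < L"
    then obtain t where t: "t \<ge> 0" "x < f t" unfolding L_def using less_cSUP_iff[OF _ bdd] by force
    show "\<forall>\<^sub>F n in at_top. x < f n"
      using eventually_ge_at_top[of t] by (rule eventually_mono) (use t mono in force)
  qed
  then show ?thesis using up by blast
qed

lemma nonneg_linear:
  fixes f g :: "real \<Rightarrow> real"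
  assumes d: "\<And>t. t \<ge> 0 \<Longrightarrow> (f has_real_derivative f t * g t) (at t within {0..})"
    and gc: "continuous_on {0..} g" and f0: "f 0 \<ge> 0" and t: "t \<ge> 0"
  shows "f t \<ge> 0"
proof -
  define G where "G u = integral {0..u} g" for u
  define H where "H u = f u * exp (- G u)" for u
  have gc': "continuous_on {0..t} g" using gc by (rule continuous_on_subset) auto
  have "\<exists>x\<in>{0..t}. H t - H 0 = 0 * (t - 0)"
  proof (rule mvt_w[OF t order_refl])
    fix x assume x: "x \<in> {0..t}"
    have x0: "x \<ge> 0" using x by simp
    have sub: "{0..t} \<subseteq> {0::real..}" by auto
    have dG: "(G has_real_derivative g x) (at x within {0..t})"
      unfolding G_def using integral_has_real_derivative[OF gc' x] .
    have dG': "((\<lambda>u. - G u) has_real_derivative - g x) (at x within {0..t})"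
      using DERIV_minus[OF dG] .
    have dE: "((\<lambda>u. exp (- G u)) has_real_derivative exp (- G x) * (- g x)) (at x within {0..t})"
      using DERIV_chain2[OF DERIV_exp dG'] .
    have df: "(f has_real_derivative f x * g x) (at x within {0..t})"
      by (rule has_field_derivative_subset[OF d[OF x0] sub])
    have "(H has_real_derivative f x * g x * exp (- G x) + exp (- G x) * (- g x) * f x) (at x within {0..t})"
      unfolding H_def using DERIV_mult[OF df dE] .
    moreover have "f x * g x * exp (- G x) + exp (- G x) * (- g x) * f x = 0" by (simp add: algebra_simps)
    ultimately show "(H has_real_derivative 0) (at x within {0..t})" by simp
  qed
  then have "H t = H 0" by simp
  then have "f t * exp (- G t) = f 0" by (simp add: H_def G_def)
  then have h: "f t * exp (- G t) \<ge> 0" using f0 by simp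
  have "exp (- G t) > 0" by simp
  then show ?thesis using h by (metis not_le mult_neg_pos less_le_trans order.irrefl)
qed

lemma barbalat:
  fixes F f f' :: "real \<Rightarrow> real"
  assumes dF: "\<And>t. t \<ge> 0 \<Longrightarrow> (F has_real_derivative f t) (at t within {0..})"
    and conv: "(F \<longlongrightarrow> L) at_top"
    and fnn: "\<And>t. t \<ge> 0 \<Longrightarrow> f t \<ge> 0"
    and df: "\<And>t. t \<ge> 0 \<Longrightarrow> (f has_real_derivative f' t) (at t within {0..})"
    and bnd: "\<And>t. t \<ge> 0 \<Longrightarrow> \<bar>f' t\<bar> \<le> K" and Kpos: "K > 0"
  shows "(f \<longlongrightarrow> 0) at_top"
  unfolding tendsto_iff
proof (intro allI impI)
  fix e :: real assume e: "e > 0"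
  define d where "d = e / (2 * K)"
  have d: "d > 0" using e Kpos by (simp add: d_def)
  have Kd: "K * d = e / 2" using Kpos by (simp add: d_def)
  define \<eta> where "\<eta> = e * d / 4"
  have \<eta>: "\<eta> > 0" using e d by (simp add: \<eta>_def)
  from conv \<eta> have "\<forall>\<^sub>F t in at_top. dist (F t) L < \<eta>" by (rule tendstoD)
  then obtain T where T: "\<And>t. t \<ge> T \<Longrightarrow> dist (F t) L < \<eta>" by (auto simp: eventually_at_top_linorder)
  show "\<forall>\<^sub>F t in at_top. dist (f t) 0 < e"
    using eventually_ge_at_top[of "max T 0"]
  proof (rule eventually_mono)
    fix t assume t: "max T 0 \<le> t"
    show "dist (f t) 0 < e"
    proof (rule ccontr)
      assume "\<not> dist (f t) 0 < e"
      then have ft: "f t \<ge> e" using fnn[of t] t by auto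
      have low: "f x \<ge> e / 2" if x: "x \<in> {t..t+d}" for x
      proof -
        obtain z where z: "z \<in> {t..x}" "f x - f t = f' z * (x - t)"
          using mvt_w[of t x "{0..}" f f'] x t df by auto
        have "\<bar>f' z * (x - t)\<bar> \<le> K * d"
          using bnd[of z] z(1) t x d Kpos by (auto simp: abs_mult intro!: mult_mono)
        then show ?thesis using z(2) ft Kd by auto
      qed
      obtain x where x: "x \<in> {t..t+d}" "F (t+d) - F t = f x * (t + d - t)"
        using mvt_w[of t "t+d" "{0..}" F f] d t dF by auto
      have "F (t+d) - F t \<ge> e / 2 * d"
        using x low[of x] d by (simp add: mult_right_mono)
      moreover have "\<bar>F (t+d) - L\<bar> < \<eta>" "\<bar>F t - L\<bar> < \<eta>" using T[of t] T[of "t+d"] t d by (auto simp: dist_real_def)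
      ultimately show False unfolding \<eta>_def by linarith
    qed
  qed
qed



lemma exp_bound:
  fixes z g :: "real \<Rightarrow> real"
  assumes dz: "\<And>u. u \<in> {a..s} \<Longrightarrow> (z has_real_derivative g u - c * z u) (at u within {0..})"
    and a: "a \<ge> 0" "a \<le> s" and z0: "z a \<ge> 0"
    and gb: "\<And>u. u \<in> {a..s} \<Longrightarrow> g u \<ge> - B" and B: "B \<ge> 0" and c: "c \<ge> 0"
    and sd: "s - a \<le> \<delta>"
  shows "z s \<ge> - B * \<delta>"
proof -
  define Z where "Z u = z u * exp (c * u)" for u
  have "\<exists>x\<in>{a..s}. Z s - Z a = g x * exp (c * x) * (s - a)"
  proof (rule mvt_w[of a s "{0..}"])
    fix u assume u: "u \<in> {a..s}"
    have d1: "(z has_real_derivative g u - c * z u) (at u within {0..})" using dz u by blast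
    have d2: "((\<lambda>u. exp (c*u)) has_real_derivative exp (c*u) * c) (at u within {0..})"
      by (auto intro!: derivative_eq_intros)
    have "(Z has_real_derivative (g u - c * z u) * exp (c * u) + exp (c * u) * c * z u) (at u within {0..})"
      unfolding Z_def using DERIV_mult[OF d1 d2] .
    then show "(Z has_real_derivative g u * exp (c * u)) (at u within {0..})"
      by (simp add: algebra_simps)
  qed (use a in auto)
  then obtain x where x: "x \<in> {a..s}" "Z s - Z a = g x * exp (c * x) * (s - a)" by blast
  have e1: "0 \<le> exp (c * x) * (s - a)" using x by simp
  have e3: "exp (c * x) \<le> exp (c * s)" using x c by (simp add: mult_left_mono)
  have e2: "exp (c * x) * (s - a) \<le> exp (c * s) * \<delta>"
    using x sd e3 by (intro mult_mono) simp_all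
  have "g x * (exp (c * x) * (s - a)) \<ge> (- B) * (exp (c * x) * (s - a))"
    using gb[OF x(1)] e1 by (rule mult_right_mono)
  also have "(- B) * (exp (c * x) * (s - a)) \<ge> (- B) * (exp (c * s) * \<delta>)"
    using e2 B by (simp add: mult_left_mono)
  finally have "Z s \<ge> Z a - B * (exp (c * s) * \<delta>)" using x(2) by (simp add: mult.assoc)
  moreover have "Z a \<ge> 0" using z0 by (simp add: Z_def)
  ultimately have "z s * exp (c * s) \<ge> (- B * \<delta>) * exp (c * s)" by (simp add: Z_def algebra_simps)
  then show ?thesis by (metis exp_gt_zero mult_le_cancel_right_pos)
qed

lemma local_pos:
  fixes x y \<alpha> :: "real \<Rightarrow> real"
  assumes dx: "\<And>t. t \<ge> 0 \<Longrightarrow> (x has_real_derivative \<alpha> t * y t - \<sigma> * x t) (at t within {0..})"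
    and dy: "\<And>t. t \<ge> 0 \<Longrightarrow> (y has_real_derivative \<sigma> * x t - \<gamma> * y t) (at t within {0..})"
    and \<alpha>: "\<And>t. t \<in> {t0..t0+\<delta>} \<Longrightarrow> 0 \<le> \<alpha> t \<and> \<alpha> t \<le> A"
    and pars: "\<sigma> \<ge> 0" "\<gamma> \<ge> 0" "\<delta> > 0" "(A + \<sigma>) * \<delta> \<le> 1/2" "t0 \<ge> 0"
    and init: "x t0 \<ge> 0" "y t0 \<ge> 0"
  shows "\<forall>s\<in>{t0..t0+\<delta>}. x s \<ge> 0 \<and> y s \<ge> 0"
proof -
  define n where "n s = max 0 (max (- x s) (- y s))" for s
  have cx: "continuous_on {0..} x" using dx by (intro DERIV_continuous_on) auto
  have cy: "continuous_on {0..} y" using dy by (intro DERIV_continuous_on) auto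
  have cn: "continuous_on {t0..t0+\<delta>} n" unfolding n_def
    using continuous_on_subset[OF cx, of "{t0..t0+\<delta>}"] continuous_on_subset[OF cy, of "{t0..t0+\<delta>}"] pars
    by (intro continuous_intros) auto
  obtain sm where sm: "sm \<in> {t0..t0+\<delta>}" "\<And>s. s \<in> {t0..t0+\<delta>} \<Longrightarrow> n s \<le> n sm"
    using continuous_attains_sup[OF compact_Icc _ cn] pars by auto
  define m where "m = n sm"
  have m0: "m \<ge> 0" by (simp add: m_def n_def)
  have A0: "A \<ge> 0" using \<alpha>[of t0] pars by auto
  have ym: "y s \<ge> - m" "x s \<ge> - m" if "s \<in> {t0..t0+\<delta>}" for s
    using sm(2)[OF that] by (auto simp: m_def n_def)
  have xb: "x s \<ge> - (A * m) * \<delta>" if s: "s \<in> {t0..t0+\<delta>}" for s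
  proof -
    have d: "(x has_real_derivative \<alpha> u * y u - \<sigma> * x u) (at u within {0..})" if u: "u \<in> {t0..s}" for u
      using dx u pars by auto
    have g: "\<alpha> u * y u \<ge> - (A * m)" if u: "u \<in> {t0..s}" for u
    proof -
      have u': "u \<in> {t0..t0+\<delta>}" using s u by auto
      have "\<alpha> u * y u \<ge> \<alpha> u * (- m)" using ym[OF u'] \<alpha>[OF u'] by (intro mult_left_mono) auto
      moreover have "\<alpha> u * (- m) \<ge> A * (- m)" using \<alpha>[OF u'] m0 by (intro mult_right_mono_neg) auto
      ultimately show ?thesis by simp
    qed
    show ?thesis using exp_bound[where z = x and g = "\<lambda>u. \<alpha> u * y u" and c = \<sigma> and a = t0 and B = "A * m" and \<delta> = \<delta> and s = s]
      d g s pars init A0 m0 by auto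
  qed
  have yb: "y s \<ge> - (\<sigma> * m) * \<delta>" if s: "s \<in> {t0..t0+\<delta>}" for s
  proof -
    have d: "(y has_real_derivative \<sigma> * x u - \<gamma> * y u) (at u within {0..})" if u: "u \<in> {t0..s}" for u
      using dy u pars by auto
    have g: "\<sigma> * x u \<ge> - (\<sigma> * m)" if u: "u \<in> {t0..s}" for u
    proof -
      have u': "u \<in> {t0..t0+\<delta>}" using s u by auto
      show ?thesis using mult_left_mono[OF ym(2)[OF u'], of \<sigma>] pars by simp
    qed
    show ?thesis using exp_bound[where z = y and g = "\<lambda>u. \<sigma> * x u" and c = \<gamma> and a = t0 and B = "\<sigma> * m" and \<delta> = \<delta> and s = s]
      d g s pars init m0 by auto
  qed
  have "A * m * \<delta> \<le> m / 2" "\<sigma> * m * \<delta> \<le> m / 2"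
  proof -
    have "A * \<delta> \<ge> 0" "\<sigma> * \<delta> \<ge> 0" using pars A0 by auto
    moreover have "A * \<delta> + \<sigma> * \<delta> \<le> 1/2" using pars by (simp add: algebra_simps)
    ultimately have "A * \<delta> \<le> 1/2" "\<sigma> * \<delta> \<le> 1/2" by linarith+
    then show "A * m * \<delta> \<le> m / 2" "\<sigma> * m * \<delta> \<le> m / 2" using m0
      by (metis mult.commute mult.left_commute mult_left_mono times_divide_eq_right mult.right_neutral)+
  qed
  then have "n sm \<le> m / 2" using xb[OF sm(1)] yb[OF sm(1)] m0 by (auto simp: n_def)
  then have "m = 0" using m0 by (simp add: m_def)
  then show ?thesis using ym by auto
qed

lemma global_pos:
  fixes x y \<alpha> :: "real \<Rightarrow> real"
  assumes dx: "\<And>t. t \<ge> 0 \<Longrightarrow> (x has_real_derivative \<alpha> t * y t - \<sigma> * x t) (at t within {0..})"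
    and dy: "\<And>t. t \<ge> 0 \<Longrightarrow> (y has_real_derivative \<sigma> * x t - \<gamma> * y t) (at t within {0..})"
    and \<alpha>: "\<And>t. t \<ge> 0 \<Longrightarrow> 0 \<le> \<alpha> t" and \<alpha>c: "continuous_on {0..} \<alpha>"
    and pars: "\<sigma> > 0" "\<gamma> \<ge> 0"
    and init: "x 0 \<ge> 0" "y 0 \<ge> 0" and t: "t \<ge> 0"
  shows "x t \<ge> 0 \<and> y t \<ge> 0"
proof -
  obtain u where u: "u \<in> {0..t+1}" "\<And>v. v \<in> {0..t+1} \<Longrightarrow> \<alpha> v \<le> \<alpha> u"
    using continuous_attains_sup[OF compact_Icc _ continuous_on_subset[OF \<alpha>c], of 0 "t+1"] t by auto
  define A where "A = \<alpha> u"
  have A0: "A \<ge> 0" using \<alpha> u by (auto simp: A_def)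
  define \<delta> where "\<delta> = min 1 (1 / (2 * (A + \<sigma>)))"
  have \<delta>: "\<delta> > 0" "\<delta> \<le> 1" using A0 pars by (auto simp: \<delta>_def)
  have \<delta>2: "(A + \<sigma>) * \<delta> \<le> 1/2"
  proof -
    have "(A + \<sigma>) * \<delta> \<le> (A + \<sigma>) * (1 / (2 * (A + \<sigma>)))"
      using A0 pars by (intro mult_left_mono) (auto simp: \<delta>_def)
    also have "\<dots> = 1/2" using A0 pars by simp
    finally show ?thesis .
  qed
  have ind: "real k * \<delta> \<le> t + 1 \<longrightarrow> (\<forall>s\<in>{0..real k * \<delta>}. x s \<ge> 0 \<and> y s \<ge> 0)" for k
  proof (induction k)
    case 0
    then show ?case using init by auto
  next
    case (Suc k)
    show ?case
    proof
      assume h: "real (Suc k) * \<delta> \<le> t + 1"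
      then have hk: "real k * \<delta> \<le> t + 1" using \<delta> by (auto simp: algebra_simps)
      with Suc.IH have IH: "\<forall>s\<in>{0..real k * \<delta>}. x s \<ge> 0 \<and> y s \<ge> 0" by blast
      have k0: "real k * \<delta> \<ge> 0" using \<delta> by simp
      have loc: "\<forall>s\<in>{real k * \<delta>..real k * \<delta>+\<delta>}. x s \<ge> 0 \<and> y s \<ge> 0"
      proof (rule local_pos[where \<alpha> = \<alpha> and A = A and \<sigma> = \<sigma> and \<gamma> = \<gamma>])
        fix v assume v: "v \<in> {real k * \<delta>..real k * \<delta> + \<delta>}"
        have v1: "real k * \<delta> \<le> v" "v \<le> real k * \<delta> + \<delta>" using v by auto
        have "real (Suc k) * \<delta> = real k * \<delta> + \<delta>" by (simp add: algebra_simps)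
        then have "0 \<le> v" "v \<le> t + 1" using h k0 v1 by linarith+
        then have "v \<in> {0..t+1}" by simp
        then show "0 \<le> \<alpha> v \<and> \<alpha> v \<le> A" using u \<alpha> by (auto simp: A_def)
      qed (use dx dy pars \<delta> \<delta>2 k0 IH in auto)
      show "\<forall>s\<in>{0..real (Suc k) * \<delta>}. x s \<ge> 0 \<and> y s \<ge> 0"
      proof
        fix s assume s: "s \<in> {0..real (Suc k) * \<delta>}"
        show "x s \<ge> 0 \<and> y s \<ge> 0"
        proof (cases "s \<le> real k * \<delta>")
          case True then show ?thesis using IH s by auto
        next
          case False then show ?thesis using loc s by (auto simp: algebra_simps)
        qed
      qed
    qed
  qed
  define k where "k = nat \<lceil>t / \<delta>\<rceil>"
  have "real k = of_int \<lceil>t / \<delta>\<rceil>" using t \<delta> by (simp add: k_def)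
  then have k1: "real k \<ge> t / \<delta>" "real k < t / \<delta> + 1" by linarith+
  have "real k * \<delta> \<ge> t" using k1(1) \<delta> by (simp add: field_simps)
  moreover have "real k * \<delta> < t + \<delta>" using k1(2) \<delta> by (simp add: field_simps)
  ultimately show ?thesis using ind[of k] t \<delta> by auto
qed


lemma deriv_eq: "(f has_real_derivative a) F \<Longrightarrow> a = b \<Longrightarrow> (f has_real_derivative b) F"
  by simp

theorem mainTheorem2:
  fixes N \<beta> \<rho> \<sigma> \<gamma> \<pi>1 \<pi>2 :: real
    and \<Delta>1 \<Delta>2 :: "real \<Rightarrow> real"
    and S E I R V :: "real \<Rightarrow> real"
  assumes N_pos: "N > 0" and beta_pos: "\<beta> > 0"
    and rho: "0 < \<rho>" "\<rho> < 1"
    and sigma_pos: "\<sigma> > 0" and gamma_pos: "\<gamma> > 0"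
    and pi: "0 \<le> \<pi>1" "\<pi>1 \<le> \<pi>2" "\<pi>2 \<le> 1"
    and D1_cont: "continuous_on {0..} \<Delta>1" and D2_cont: "continuous_on {0..} \<Delta>2"
    and D1_nonneg: "\<And>t. t \<ge> 0 \<Longrightarrow> \<Delta>1 t \<ge> 0"
    and D2_nonneg: "\<And>t. t \<ge> 0 \<Longrightarrow> \<Delta>2 t \<ge> 0"
    and D1_lim: "(\<Delta>1 \<longlongrightarrow> 0) at_top" and D2_lim: "(\<Delta>2 \<longlongrightarrow> 0) at_top"
    and init_nonneg: "S 0 \<ge> 0" "E 0 \<ge> 0" "I 0 \<ge> 0" "R 0 \<ge> 0" "V 0 \<ge> 0"
    and init_sum: "S 0 + E 0 + I 0 + R 0 + V 0 = N"
    and S_ode: "\<And>t. t \<ge> 0 \<Longrightarrow> (S has_real_derivative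
        (- \<beta> / N * S t * (1 - \<rho>) * I t - S t / N * (\<Delta>1 t * \<pi>1 + \<Delta>2 t * (\<pi>2 - \<pi>1))))
        (at t within {0..})"
    and E_ode: "\<And>t. t \<ge> 0 \<Longrightarrow> (E has_real_derivative
        (\<beta> / N * S t * (1 - \<rho>) * I t - \<sigma> * E t)) (at t within {0..})"
    and I_ode: "\<And>t. t \<ge> 0 \<Longrightarrow> (I has_real_derivative (\<sigma> * E t - \<gamma> * I t)) (at t within {0..})"
    and R_ode: "\<And>t. t \<ge> 0 \<Longrightarrow> (R has_real_derivative (\<gamma> * I t)) (at t within {0..})"
    and V_ode: "\<And>t. t \<ge> 0 \<Longrightarrow> (V has_real_derivative
        (S t / N * (\<Delta>1 t * \<pi>1 + \<Delta>2 t * (\<pi>2 - \<pi>1)))) (at t within {0..})"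
  shows "\<exists>S_inf V_inf. S_inf \<ge> 0 \<and> V_inf \<ge> 0 \<and> S_inf + V_inf \<le> N
     \<and> (S \<longlongrightarrow> S_inf) at_top \<and> (E \<longlongrightarrow> 0) at_top \<and> (I \<longlongrightarrow> 0) at_top
     \<and> (R \<longlongrightarrow> N - S_inf - V_inf) at_top \<and> (V \<longlongrightarrow> V_inf) at_top"
proof -
  define q where "q t = \<Delta>1 t * \<pi>1 + \<Delta>2 t * (\<pi>2 - \<pi>1)" for t
  have q_nn: "q t \<ge> 0" if "t \<ge> 0" for t
    using D1_nonneg[OF that] D2_nonneg[OF that] pi by (simp add: q_def)
  have Sc: "continuous_on {0..} S" using S_ode by (intro DERIV_continuous_on) auto
  have Ic: "continuous_on {0..} I" using I_ode by (intro DERIV_continuous_on) auto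
  have qc: "continuous_on {0..} q" unfolding q_def by (intro continuous_intros D1_cont D2_cont)
  have S_nn: "S t \<ge> 0" if t: "t \<ge> 0" for t
  proof (rule nonneg_linear[where g = "\<lambda>t. - (\<beta> / N * (1 - \<rho>) * I t + q t / N)", OF _ _ _ t])
    fix t :: real assume t: "t \<ge> 0"
    have eq: "- \<beta> / N * S t * (1 - \<rho>) * I t - S t / N * (\<Delta>1 t * \<pi>1 + \<Delta>2 t * (\<pi>2 - \<pi>1))
       = S t * - (\<beta> / N * (1 - \<rho>) * I t + q t / N)" using N_pos by (simp add: q_def field_simps)
    show "(S has_real_derivative S t * - (\<beta> / N * (1 - \<rho>) * I t + q t / N)) (at t within {0..})"
      using S_ode[OF t] eq by (rule deriv_eq)
  next
    show "continuous_on {0..} (\<lambda>t. - (\<beta> / N * (1 - \<rho>) * I t + q t / N))"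
      using N_pos by (intro continuous_intros Ic qc) auto
  qed (use init_nonneg in auto)
  have EI_nn: "E t \<ge> 0 \<and> I t \<ge> 0" if t: "t \<ge> 0" for t
  proof (rule global_pos[where \<alpha> = "\<lambda>t. \<beta> / N * S t * (1 - \<rho>)" and \<sigma> = \<sigma> and \<gamma> = \<gamma>, OF _ _ _ _ _ _ _ _ t])
    show "continuous_on {0..} (\<lambda>t. \<beta> / N * S t * (1 - \<rho>))" by (intro continuous_intros Sc)
  next
    fix t :: real assume "t \<ge> 0"
    then show "0 \<le> \<beta> / N * S t * (1 - \<rho>)" using S_nn beta_pos N_pos rho by simp
  qed (use E_ode I_ode sigma_pos gamma_pos init_nonneg in auto)
  have E_nn: "E t \<ge> 0" and I_nn: "I t \<ge> 0" if "t \<ge> 0" for t using EI_nn[OF that] by auto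
  have R_mono: "R s \<le> R t" if st: "0 \<le> s" "s \<le> t" for s t
  proof -
    obtain x where "x \<in> {s..t}" "R t - R s = \<gamma> * I x * (t - s)"
      using mvt_w[of s t "{0..}" R "\<lambda>t. \<gamma> * I t"] R_ode st by auto
    moreover have "\<gamma> * I x * (t - s) \<ge> 0" using I_nn[of x] gamma_pos st \<open>x \<in> {s..t}\<close> by simp
    ultimately show ?thesis by simp
  qed
  have V_mono: "V s \<le> V t" if st: "0 \<le> s" "s \<le> t" for s t
  proof -
    obtain x where "x \<in> {s..t}" "V t - V s = S x / N * q x * (t - s)"
      using mvt_w[of s t "{0..}" V "\<lambda>t. S t / N * q t"] V_ode st unfolding q_def by auto
    moreover have "S x / N * q x * (t - s) \<ge> 0" using S_nn[of x] q_nn[of x] N_pos st \<open>x \<in> {s..t}\<close> by simp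
    ultimately show ?thesis by simp
  qed
  have S_mono: "- S s \<le> - S t" if st: "0 \<le> s" "s \<le> t" for s t
  proof -
    obtain x where "x \<in> {s..t}" "S t - S s = (- \<beta> / N * S x * (1 - \<rho>) * I x - S x / N * q x) * (t - s)"
      using mvt_w[of s t "{0..}" S "\<lambda>t. - \<beta> / N * S t * (1 - \<rho>) * I t - S t / N * q t"] S_ode st
      unfolding q_def by auto
    moreover have "\<beta> / N * S x * (1 - \<rho>) * I x \<ge> 0" "S x / N * q x \<ge> 0"
      using S_nn[of x] q_nn[of x] I_nn[of x] N_pos beta_pos rho st \<open>x \<in> {s..t}\<close> by simp_all
    ultimately have "S t - S s \<le> 0" using st by (simp add: mult_nonpos_nonneg)
    then show ?thesis by simp
  qed
  have cons: "S t + E t + I t + R t + V t = N" if t: "t \<ge> 0" for t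
  proof -
    have "\<exists>x\<in>{0..t}. (S t + E t + I t + R t + V t) - (S 0 + E 0 + I 0 + R 0 + V 0) = 0 * (t - 0)"
    proof (rule mvt_w[of 0 t "{0..}" "\<lambda>t. S t + E t + I t + R t + V t"])
      fix x :: real assume x: "x \<in> {0..t}"
      then have x0: "x \<ge> 0" by auto
      have "((\<lambda>t. S t + E t + I t + R t + V t) has_real_derivative
        (- \<beta> / N * S x * (1 - \<rho>) * I x - S x / N * (\<Delta>1 x * \<pi>1 + \<Delta>2 x * (\<pi>2 - \<pi>1)))
        + (\<beta> / N * S x * (1 - \<rho>) * I x - \<sigma> * E x) + (\<sigma> * E x - \<gamma> * I x) + \<gamma> * I x
        + S x / N * (\<Delta>1 x * \<pi>1 + \<Delta>2 x * (\<pi>2 - \<pi>1))) (at x within {0..})"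
        by (intro DERIV_add S_ode E_ode I_ode R_ode V_ode x0)
      then show "((\<lambda>t. S t + E t + I t + R t + V t) has_real_derivative 0) (at x within {0..})"
        by (simp add: algebra_simps)
    qed (use t in auto)
    then show ?thesis using init_sum by auto
  qed
  have R_nn: "R t \<ge> 0" if "t \<ge> 0" for t using R_mono[of 0 t] that init_nonneg by auto
  have V_nn: "V t \<ge> 0" if "t \<ge> 0" for t using V_mono[of 0 t] that init_nonneg by auto
  have ub: "S t \<le> N" "E t \<le> N" "I t \<le> N" "R t \<le> N" "V t \<le> N" "S t + V t \<le> N" if "t \<ge> 0" for t
    using cons[OF that] S_nn[OF that] E_nn[OF that] I_nn[OF that] R_nn[OF that] V_nn[OF that] by linarith+
  obtain LS where LS: "((\<lambda>t. - S t) \<longlongrightarrow> LS) at_top"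
    using mono_conv[of "\<lambda>t. - S t" 0] S_mono S_nn by force
  define S_inf where "S_inf = - LS"
  have S_lim: "(S \<longlongrightarrow> S_inf) at_top"
    using tendsto_minus[OF LS] by (simp add: S_inf_def)
  obtain V_inf where V_lim: "(V \<longlongrightarrow> V_inf) at_top"
    using mono_conv[of V N] V_mono ub by force
  obtain R_inf where R_lim: "(R \<longlongrightarrow> R_inf) at_top"
    using mono_conv[of R N] R_mono ub by force
  have bI: "\<bar>\<gamma> * (\<sigma> * E t - \<gamma> * I t)\<bar> \<le> \<gamma> * (\<sigma> * N + \<gamma> * N)" if t: "t \<ge> 0" for t
  proof -
    have "0 \<le> \<sigma> * E t" "\<sigma> * E t \<le> \<sigma> * N" "0 \<le> \<gamma> * I t" "\<gamma> * I t \<le> \<gamma> * N"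
      using E_nn[OF t] I_nn[OF t] ub[OF t] sigma_pos gamma_pos by (simp_all add: mult_left_mono)
    then have "\<bar>\<sigma> * E t - \<gamma> * I t\<bar> \<le> \<sigma> * N + \<gamma> * N" by linarith
    then show ?thesis using gamma_pos by (simp add: abs_mult mult_left_mono)
  qed
  have gI: "((\<lambda>t. \<gamma> * I t) \<longlongrightarrow> 0) at_top"
  proof (rule barbalat[where F = R and L = R_inf and f' = "\<lambda>t. \<gamma> * (\<sigma> * E t - \<gamma> * I t)"
        and K = "\<gamma> * (\<sigma> * N + \<gamma> * N) + 1"])
    fix t :: real assume t: "t \<ge> 0"
    show "((\<lambda>t. \<gamma> * I t) has_real_derivative \<gamma> * (\<sigma> * E t - \<gamma> * I t)) (at t within {0..})"
      using I_ode[OF t] by (rule DERIV_cmult)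
    show "\<bar>\<gamma> * (\<sigma> * E t - \<gamma> * I t)\<bar> \<le> \<gamma> * (\<sigma> * N + \<gamma> * N) + 1" using bI[OF t] by simp
  next
    have "0 \<le> \<gamma> * (\<sigma> * N + \<gamma> * N)" using gamma_pos sigma_pos N_pos by simp
    then show "0 < \<gamma> * (\<sigma> * N + \<gamma> * N) + 1" by simp
  qed (use R_ode R_lim I_nn gamma_pos in auto)
  have I_lim: "(I \<longlongrightarrow> 0) at_top"
  proof -
    have "((\<lambda>t. (1 / \<gamma>) * (\<gamma> * I t)) \<longlongrightarrow> (1 / \<gamma>) * 0) at_top"
      by (intro tendsto_intros gI)
    then show ?thesis using gamma_pos by simp
  qed
  have bE: "\<bar>\<sigma> * (\<beta> / N * S t * (1 - \<rho>) * I t - \<sigma> * E t)\<bar> \<le> \<sigma> * (\<beta> * N + \<sigma> * N)" if t: "t \<ge> 0" for t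
  proof -
    have a1: "0 \<le> \<beta> / N * S t" "\<beta> / N * S t \<le> \<beta> / N * N"
    proof -
      show "0 \<le> \<beta> / N * S t" using S_nn[OF t] beta_pos N_pos by simp
      have "0 \<le> \<beta> / N" using beta_pos N_pos by simp
      then show "\<beta> / N * S t \<le> \<beta> / N * N" using ub(1)[OF t] by (rule mult_left_mono[rotated])
    qed
    have a2: "0 \<le> \<beta> / N * S t * (1 - \<rho>)" "\<beta> / N * S t * (1 - \<rho>) \<le> \<beta>"
    proof -
      show "0 \<le> \<beta> / N * S t * (1 - \<rho>)" using mult_nonneg_nonneg[OF a1(1), of "1 - \<rho>"] rho by simp
      have "\<beta> / N * S t * (1 - \<rho>) \<le> \<beta> / N * N * 1" by (rule mult_mono[OF a1(2)]) (use rho beta_pos N_pos in auto)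
      then show "\<beta> / N * S t * (1 - \<rho>) \<le> \<beta>" using N_pos by simp
    qed
    have a3: "0 \<le> \<beta> / N * S t * (1 - \<rho>) * I t" "\<beta> / N * S t * (1 - \<rho>) * I t \<le> \<beta> * N"
      by (rule mult_nonneg_nonneg[OF a2(1) I_nn[OF t]], rule mult_mono[OF a2(2) ub(3)[OF t]])
        (use beta_pos I_nn[OF t] in auto)
    have "0 \<le> \<sigma> * E t" "\<sigma> * E t \<le> \<sigma> * N"
      using E_nn[OF t] ub[OF t] sigma_pos by (simp_all add: mult_left_mono)
    then have "\<bar>\<beta> / N * S t * (1 - \<rho>) * I t - \<sigma> * E t\<bar> \<le> \<beta> * N + \<sigma> * N" using a3 by linarith
    then show ?thesis using sigma_pos by (simp add: abs_mult mult_left_mono)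
  qed
  have sE: "((\<lambda>t. \<sigma> * E t) \<longlongrightarrow> 0) at_top"
  proof (rule barbalat[where F = "\<lambda>t. I t + R t" and L = "0 + R_inf"
        and f' = "\<lambda>t. \<sigma> * (\<beta> / N * S t * (1 - \<rho>) * I t - \<sigma> * E t)"
        and K = "\<sigma> * (\<beta> * N + \<sigma> * N) + 1"])
    fix t :: real assume t: "t \<ge> 0"
    show "((\<lambda>t. \<sigma> * E t) has_real_derivative \<sigma> * (\<beta> / N * S t * (1 - \<rho>) * I t - \<sigma> * E t)) (at t within {0..})"
      using E_ode[OF t] by (rule DERIV_cmult)
    show "\<bar>\<sigma> * (\<beta> / N * S t * (1 - \<rho>) * I t - \<sigma> * E t)\<bar> \<le> \<sigma> * (\<beta> * N + \<sigma> * N) + 1"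
      using bE[OF t] by simp
    have "((\<lambda>t. I t + R t) has_real_derivative (\<sigma> * E t - \<gamma> * I t) + \<gamma> * I t) (at t within {0..})"
      by (intro DERIV_add I_ode R_ode t)
    then show "((\<lambda>t. I t + R t) has_real_derivative \<sigma> * E t) (at t within {0..})" by simp
    show "0 \<le> \<sigma> * E t" using E_nn[OF t] sigma_pos by simp
  next
    show "((\<lambda>t. I t + R t) \<longlongrightarrow> 0 + R_inf) at_top" by (intro tendsto_intros I_lim R_lim)
  next
    have "0 \<le> \<sigma> * (\<beta> * N + \<sigma> * N)" using beta_pos sigma_pos N_pos by simp
    then show "0 < \<sigma> * (\<beta> * N + \<sigma> * N) + 1" by simp
  qed
  have E_lim: "(E \<longlongrightarrow> 0) at_top"
  proof -
    have "((\<lambda>t. (1 / \<sigma>) * (\<sigma> * E t)) \<longlongrightarrow> (1 / \<sigma>) * 0) at_top"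
      by (intro tendsto_intros sE)
    then show ?thesis using sigma_pos by simp
  qed
  have Rl1: "((\<lambda>t. N - S t - E t - I t - V t) \<longlongrightarrow> N - S_inf - 0 - 0 - V_inf) at_top"
    by (intro tendsto_intros S_lim E_lim I_lim V_lim)
  have Rev: "\<forall>\<^sub>F t in at_top. N - S t - E t - I t - V t = R t"
  proof (rule eventually_mono[OF eventually_ge_at_top[of 0]])
    fix t :: real assume "0 \<le> t"
    from cons[OF this] show "N - S t - E t - I t - V t = R t" by linarith
  qed
  have "((\<lambda>t. N - S t - E t - I t - V t) \<longlongrightarrow> N - S_inf - 0 - 0 - V_inf) at_top
      \<longleftrightarrow> (R \<longlongrightarrow> N - S_inf - 0 - 0 - V_inf) at_top"
    using Rev by (rule tendsto_cong)
  with Rl1 have R_lim': "(R \<longlongrightarrow> N - S_inf - V_inf) at_top" by simp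
  have ev0: "\<forall>\<^sub>F t in at_top. (0::real) \<le> t" by (rule eventually_ge_at_top)
  have e1: "\<forall>\<^sub>F t in at_top. 0 \<le> S t" using ev0 by (rule eventually_mono) (rule S_nn)
  have e2: "\<forall>\<^sub>F t in at_top. 0 \<le> V t" using ev0 by (rule eventually_mono) (rule V_nn)
  have e3: "\<forall>\<^sub>F t in at_top. S t + V t \<le> N" using ev0 by (rule eventually_mono) (rule ub(6))
  have "S_inf \<ge> 0"
    using tendsto_lowerbound[OF S_lim e1] by simp
  moreover have "V_inf \<ge> 0"
    using tendsto_lowerbound[OF V_lim e2] by simp
  moreover have "S_inf + V_inf \<le> N"
    using tendsto_upperbound[OF tendsto_add[OF S_lim V_lim] e3] by simp
  ultimately show ?thesis using S_lim E_lim I_lim R_lim' V_lim by blast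
qed

end
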